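(* Let $n\ge 2r$. Let $\bm{U}_r,\bm{V}_r\in\mathbb{R}^{n\times r}$ have orthonormal columns spanning the column and row spaces of a rank-$r$ matrix $\bm{X}^\star\in\mathbb{R}^{n\times n}$, and let $\widetilde{\bm{U}}_r,\widetilde{\bm{V}}_r\in\mathbb{R}^{n\times r}$ have orthonormal columns. Let $\bm{U}_r^T\widetilde{\bm{U}}_r=\bm{L}_L\cos(\bm{\Gamma})\bm{R}_L^T$ and $\bm{V}_r^T\widetilde{\bm{V}}_r=\bm{L}_R\cos(\bm{H})\bm{R}_R^T$ be SVDs, with $\bm{L}_L,\bm{R}_L,\bm{L}_R,\bm{R}_R\in\mathbb{R}^{r\times r}$ orthogonal and $\bm{\Gamma}=\mathrm{diag}(\gamma_1,\dots,\gamma_r)$, $\bm{H}=\mathrm{diag}(\eta_1,\dots,\eta_r)$ the diagonal matrices of principal angles (in $[0,\pi/2]$) between $\mathrm{span}(\bm{U}_r)$ and $\mathrm{span}(\widetilde{\bm{U}}_r)$, respectively between $\mathrm{span}(\bm{V}_r)$ and $\mathrm{span}(\widetilde{\bm{V}}_r)$. Define $$\bm{A}_{cc}=\bm{L}_L\cos(\bm{\Gamma})\bm{R}_L^T\bm{R}_R\cos(\bm{H})\bm{L}_R^T,\quad \bm{A}_{cs}=\bm{L}_L\cos(\bm{\Gamma})\bm{R}_L^T\bm{R}_R\sin(\bm{H})\bm{L}_R^T,$$ $$\bm{A}_{sc}=\bm{L}_L\sin(\bm{\Gamma})\bm{R}_L^T\bm{R}_R\cos(\bm{H})\bm{L}_R^T,\quad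 \bm{A}_{ss}=\bm{L}_L\sin(\bm{\Gamma})\bm{R}_L^T\bm{R}_R\sin(\bm{H})\bm{L}_R^T.$$ Let $\lambda\ge0$ and $\bm{W}_0=\bm{U}_r\bm{V}_r^T-\lambda\mathcal{P}_{\mathcal{T}}(\widetilde{\bm{U}}_r\widetilde{\bm{V}}_r^T)$. Then $$\|\bm{W}_0\|_F=\alpha_1,\quad \|\lambda\mathcal{P}_{\mathcal{T}^\perp}(\widetilde{\bm{U}}_r\widetilde{\bm{V}}_r^T)\|=\alpha_2,\quad \|\bm{W}_0\|_{\mu(\infty,2)}\le\alpha_3\beta,\quad \|\bm{W}_0\|_{\mu(\infty)}\le\alpha_3\beta,$$ where $$\alpha_1^2=\|\bm{I}_r-\lambda\bm{A}_{cc}\|_F^2+\|\lambda\bm{A}_{cs}\|_F^2+\|\lambda\bm{A}_{sc}\|_F^2,\quad \alpha_2=\|\lambda\bm{A}_{ss}\|,$$ $$\alpha_3=\|\bm{I}_r-\lambda\bm{A}_{cc}\|+\|\lambda\bm{A}_{sc}\|+\|\lambda\bm{A}_{cs}\|,\quad \beta=1\vee\sqrt{2\max_i\frac{\breve{\mu}_i}{\mu_i}}\vee\sqrt{2\max_j\frac{\breve{\nu}_j}{\nu_j}}.$$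
   Context: Notation: $\|\cdot\|$ spectral norm, $\|\cdot\|_F$ Frobenius norm, $a\vee b=\max\{a,b\}$, $\bm{e}_i$ standard basis vectors; $\cos(\bm{\Gamma})=\mathrm{diag}(\cos\gamma_1,\dots,\cos\gamma_r)$ and similarly for $\sin$ and for $\bm{H}$. $\mathcal{P}_{\mathcal{T}}(\bm{X})=\bm{U}_r\bm{U}_r^T\bm{X}+\bm{X}\bm{V}_r\bm{V}_r^T-\bm{U}_r\bm{U}_r^T\bm{X}\bm{V}_r\bm{V}_r^T$, $\mathcal{P}_{\mathcal{T}^\perp}(\bm{X})=\bm{X}-\mathcal{P}_{\mathcal{T}}(\bm{X})$. Leverage scores: for a subspace $\mathcal{S}$ of dimension $d$ with orthonormal basis matrix $\bm{S}$, $\mu_i(\mathcal{S})=\frac{n}{d}\|\bm{S}^T\bm{e}_i\|_2^2$; $\mu_i=\mu_i(\mathrm{span}(\bm{U}_r))$, $\nu_j=\mu_j(\mathrm{span}(\bm{V}_r))$ (assumed positive), $\breve{\mu}_i=\mu_i(\mathrm{span}([\bm{U}_r,\widetilde{\bm{U}}_r]))$, $\breve{\nu}_j=\mu_j(\mathrm{span}([\bm{V}_r,\widetilde{\bm{V}}_r]))$. Norms: $\|\bm{X}\|_{\mu(\infty)}=\max_{i,j}\sqrt{\frac{n}{\mu_i r}}|X_{ij}|\sqrt{\frac{n}{\nu_j r}}$, $\|\bm{X}\|_{\mu(\infty,2)}=\max\{\max_i\sqrt{\frac{n}{\mu_i r}}\|\bm{X}^T\bm{e}_i\|_2,\max_j\sqrt{\frac{n}{\nu_j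 r}}\|\bm{X}\bm{e}_j\|_2\}$. *)

theory Defs
  imports "HOL-Analysis.Analysis"
begin

definition specnorm :: "real^'n^'m \<Rightarrow> real" where
  "specnorm A = onorm (\<lambda>x. A *v x)"

definition frobnorm :: "real^'n^'m \<Rightarrow> real" where
  "frobnorm A = sqrt (\<Sum>i\<in>UNIV. \<Sum>j\<in>UNIV. (A $ i $ j)^2)"

definition diag_mat :: "real^'r \<Rightarrow> real^'r^'r" where
  "diag_mat v = (\<chi> i j. if i = j then v $ i else 0)"

text \<open>Leverage score of a subspace S of R^n at coordinate i:
  (n / dim S) * norm (B^T e_i)^2 where the columns of B form an orthonormal basis of S.\<close>
definition onb_of :: "(real^'n) set \<Rightarrow> (real^'n) set" where
  "onb_of S = (SOME B. finite B \<and> pairwise orthogonal B \<and> (\<forall>b\<in>B. norm b = 1) \<and> span B = S)"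

definition leverage :: "(real^'n) set \<Rightarrow> 'n \<Rightarrow> real" where
  "leverage S i = real CARD('n) / real (dim S) * (\<Sum>b\<in>onb_of S. (b $ i)^2)"

definition PT :: "real^'r^'n \<Rightarrow> real^'r^'n \<Rightarrow> real^'n^'n \<Rightarrow> real^'n^'n" where
  "PT U V X = U ** transpose U ** X + X ** V ** transpose V
              - U ** transpose U ** X ** V ** transpose V"

definition PTperp :: "real^'r^'n \<Rightarrow> real^'r^'n \<Rightarrow> real^'n^'n \<Rightarrow> real^'n^'n" where
  "PTperp U V X = X - PT U V X"

definition mu_inf_norm :: "real^'r^'n \<Rightarrow> real^'r^'n \<Rightarrow> real^'n^'n \<Rightarrow> real" where
  "mu_inf_norm U V X = (let n = real CARD('n); r = real CARD('r);
      mu = leverage (span (columns U)); nu = leverage (span (columns V)) in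
      Max {sqrt (n / (mu i * r)) * \<bar>X $ i $ j\<bar> * sqrt (n / (nu j * r)) | i j. True})"

definition mu_inf2_norm :: "real^'r^'n \<Rightarrow> real^'r^'n \<Rightarrow> real^'n^'n \<Rightarrow> real" where
  "mu_inf2_norm U V X = (let n = real CARD('n); r = real CARD('r);
      mu = leverage (span (columns U)); nu = leverage (span (columns V)) in
      max (Max {sqrt (n / (mu i * r)) * norm (row i X) | i. True})
          (Max {sqrt (n / (nu j * r)) * norm (column j X) | j. True}))"

end

theory Submission
  imports Defs
begin

declare transpose_matrix_vector[simp del] vector_transpose_matrix[simp del]

lemma mm_add_r: "(A + B) ** C = A ** C + B ** (C::'a::semiring_1^_^_)"
  by (vector matrix_matrix_mult_def sum.distrib[symmetric] field_simps)
lemma mm_diff_l: "(A::'a::ring_1^_^_) ** (B - C) = A ** B - A ** C"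
  by (vector matrix_matrix_mult_def sum_subtractf[symmetric] field_simps)
lemma mm_diff_r: "((A::'a::ring_1^_^_) - B) ** C = A ** C - B ** C"
  by (vector matrix_matrix_mult_def sum_subtractf[symmetric] field_simps)
lemma transpose_add: "transpose (A + B) = transpose A + transpose B"
  by (vector transpose_def)
lemma transpose_diff: "transpose ((A::'a::ab_group_add^_^_) - B) = transpose A - transpose B"
  by (vector transpose_def)
lemma transpose_diag: "transpose (diag_mat v) = diag_mat v"
  by (vector transpose_def diag_mat_def)
lemma diag_mult: "diag_mat a ** diag_mat b = diag_mat (\<chi> k. a$k * b$k)"
proof -
  have "\<And>i j. (\<Sum>k\<in>UNIV. (if i = k then a$i else 0) * (if k = j then b$k else 0))
     = (\<Sum>k\<in>UNIV. if k = i then a$i * (if i = j then b$i else 0) else (0::real))"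
    by (rule sum.cong) auto
  then show ?thesis
    unfolding diag_mat_def matrix_matrix_mult_def by (simp add: vec_eq_iff)
qed
lemma diag_add: "diag_mat a + diag_mat b = diag_mat (a + b)"
  by (vector diag_mat_def)
lemma diag_one: "diag_mat (\<chi> k. 1) = mat 1"
  by (vector diag_mat_def mat_def)
lemma assoc_rule: "A ** B = C \<Longrightarrow> X ** A ** B = X ** C"
  by (metis matrix_mul_assoc)

lemma bl_mv: "bounded_linear (\<lambda>x. (A::real^'n^'m) *v x)"
  by (simp add: linear_conv_bounded_linear)
lemma spec_bound: "norm (A *v x) \<le> specnorm A * norm x"
  unfolding specnorm_def by (rule onorm[OF bl_mv])
lemma spec_le: "(\<And>x. norm ((A::real^'n^'m) *v x) \<le> b * norm x) \<Longrightarrow> specnorm A \<le> b"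
  unfolding specnorm_def by (rule onorm_le)
lemma spec_nonneg: "specnorm A \<ge> 0"
  unfolding specnorm_def by (rule onorm_pos_le[OF bl_mv])
lemma inner_mv: "inner ((A::real^'n^'m) *v x) y = inner x (transpose A *v y)"
  by (metis dot_lmul_matrix inner_commute transpose_matrix_vector)
lemma spec_transpose_le: "specnorm (transpose (A::real^'n^'m)) \<le> specnorm A"
proof (rule spec_le)
  fix y :: "real^'m"
  let ?z = "transpose A *v y"
  have "(norm ?z)^2 = inner (A *v ?z) y"
    by (simp only: inner_mv power2_norm_eq_inner)
  also have "\<dots> \<le> norm (A *v ?z) * norm y" by (rule norm_cauchy_schwarz)
  also have "\<dots> \<le> specnorm A * norm ?z * norm y"
    by (simp add: mult_right_mono spec_bound)
  finally have h: "norm ?z * norm ?z \<le> norm ?z * (specnorm A * norm y)"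
    by (simp add: power2_eq_square mult_ac)
  show "norm ?z \<le> specnorm A * norm y"
  proof (cases "norm ?z = 0")
    case True then show ?thesis by (simp add: spec_nonneg)
  next
    case False then show ?thesis using h by (simp add: mult_le_cancel_left)
  qed
qed
lemma spec_transpose: "specnorm (transpose (A::real^'n^'m)) = specnorm A"
  using spec_transpose_le[of A] spec_transpose_le[of "transpose A"] by simp
lemma norm_sq_gram: "(norm ((A::real^'n^'m) *v x))^2 = inner x ((transpose A ** A) *v x)"
  by (simp add: power2_norm_eq_inner inner_mv flip: matrix_vector_mul_assoc)
lemma gram_norm: "transpose A ** A = transpose B ** B \<Longrightarrow> norm ((A::real^'n^'m) *v x) = norm ((B::real^'n^'k) *v x)"
proof -
  assume h: "transpose A ** A = transpose B ** B"
  have "(norm (A *v x))^2 = (norm (B *v x))^2" by (simp only: norm_sq_gram h)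
  then show ?thesis by (rule power2_eq_imp_eq) simp_all
qed
lemma spec_eq: "(\<And>x. norm ((A::real^'n^'m) *v x) = norm ((B::real^'n^'k) *v x)) \<Longrightarrow> specnorm A = specnorm B"
proof -
  assume h: "\<And>x. norm (A *v x) = norm (B *v x)"
  show ?thesis
  proof (rule antisym)
    show "specnorm A \<le> specnorm B" by (rule spec_le) (simp only: h spec_bound)
    show "specnorm B \<le> specnorm A" by (rule spec_le) (simp only: h[symmetric] spec_bound)
  qed
qed
lemma spec_gram_left: assumes h: "transpose A ** A = transpose B ** B" shows "specnorm ((A::real^'n^'m) ** (C::real^'p^'n)) = specnorm ((B::real^'n^'k) ** C)"
  by (rule spec_eq) (simp only: matrix_vector_mul_assoc[symmetric] gram_norm[OF h])
lemma spec_gram_right: "A ** transpose A = B ** transpose B \<Longrightarrow> specnorm ((C::real^'n^'p) ** (A::real^'m^'n)) = specnorm (C ** (B::real^'k^'n))"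
proof -
  assume h: "A ** transpose A = B ** transpose B"
  have h2: "transpose (transpose A) ** transpose A = transpose (transpose B) ** transpose B"
    by (simp only: transpose_transpose h)
  have "specnorm (C ** A) = specnorm (transpose A ** transpose C)"
    by (simp only: spec_transpose matrix_transpose_mul[symmetric])
  also have "\<dots> = specnorm (transpose B ** transpose C)" by (rule spec_gram_left[OF h2])
  also have "\<dots> = specnorm (C ** B)"
    by (simp only: spec_transpose matrix_transpose_mul[symmetric])
  finally show ?thesis .
qed
lemma spec_scale: "specnorm (c *\<^sub>R (A::real^'n^'m)) = \<bar>c\<bar> * specnorm A"
  unfolding specnorm_def
  using onorm_scaleR[OF bl_mv, of c A] by (simp add: scaleR_matrix_vector_assoc)
lemma isometry_norm: "transpose U ** U = mat 1 \<Longrightarrow> norm ((U::real^'n^'m) *v x) = norm x"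
  using gram_norm[of U "mat 1::real^'n^'n"] by simp

definition fsq :: "real^'n^'m \<Rightarrow> real" where
  "fsq A = (\<Sum>i\<in>UNIV. \<Sum>j\<in>UNIV. (A $ i $ j)^2)"
lemma frob_fsq: "frobnorm A = sqrt (fsq A)"
  by (simp add: frobnorm_def fsq_def)
lemma mv_axis: "((A::real^'n^'m) *v axis j 1) $ i = A $ i $ j"
  by (simp add: matrix_vector_mult_def axis_def if_distrib if_distribR sum.delta' cong: if_cong)
lemma fsq_col: "fsq (A::real^'n^'m) = (\<Sum>j\<in>UNIV. (norm (A *v axis j 1))^2)"
  unfolding fsq_def power2_norm_eq_inner inner_vec_def
  by (subst sum.swap) (simp add: mv_axis power2_eq_square)
lemma fsq_transpose: "fsq (transpose A) = fsq A"
  unfolding fsq_def transpose_def by (subst sum.swap) simp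
lemma fsq_gram_left: assumes h: "transpose A ** A = transpose B ** B" shows "fsq ((A::real^'n^'m) ** (C::real^'p^'n)) = fsq ((B::real^'n^'k) ** C)"
  unfolding fsq_col by (simp only: matrix_vector_mul_assoc[symmetric] gram_norm[OF h])
lemma fsq_gram_right: "A ** transpose A = B ** transpose B \<Longrightarrow> fsq ((C::real^'n^'p) ** (A::real^'m^'n)) = fsq (C ** (B::real^'k^'n))"
proof -
  assume h: "A ** transpose A = B ** transpose B"
  have h2: "transpose (transpose A) ** transpose A = transpose (transpose B) ** transpose B"
    by (simp only: transpose_transpose h)
  have "fsq (C ** A) = fsq (transpose A ** transpose C)"
    by (simp only: fsq_transpose matrix_transpose_mul[symmetric])
  also have "\<dots> = fsq (transpose B ** transpose C)" by (rule fsq_gram_left[OF h2])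
  also have "\<dots> = fsq (C ** B)"
    by (simp only: fsq_transpose matrix_transpose_mul[symmetric])
  finally show ?thesis .
qed
lemma fsq_orth_add: "(\<And>x y. inner ((A::real^'n^'m) *v x) (B *v y) = 0) \<Longrightarrow> fsq (A + B) = fsq A + fsq B"
  unfolding fsq_col
  by (simp add: matrix_vector_mult_add_rdistrib norm_add_Pythagorean orthogonal_def sum.distrib)
lemma fsq_scale: "fsq (c *\<^sub>R (A::real^'n^'m)) = c^2 * fsq A"
  unfolding fsq_def by (simp add: sum_distrib_left power_mult_distrib)
lemma fsq_nonneg: "fsq A \<ge> 0" unfolding fsq_def by (simp add: sum_nonneg)

lemma cs_gram:
  assumes "orthogonal_matrix LL" "orthogonal_matrix RL"
  shows "transpose (LL ** diag_mat (\<chi> k. cos (g $ k)) ** transpose RL) ** (LL ** diag_mat (\<chi> k. cos (g $ k)) ** transpose RL)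
       = mat 1 - transpose (LL ** diag_mat (\<chi> k. sin (g $ k)) ** transpose RL) ** (LL ** diag_mat (\<chi> k. sin (g $ k)) ** transpose RL)"
proof -
  have L: "transpose LL ** LL = mat 1" and R: "RL ** transpose RL = mat 1"
    using assms by (auto simp: orthogonal_matrix_def)
  have e1: "\<And>v. transpose (LL ** diag_mat v ** transpose RL) ** (LL ** diag_mat v ** transpose RL)
        = RL ** (diag_mat v ** diag_mat v) ** transpose RL"
    by (simp add: matrix_transpose_mul transpose_diag matrix_mul_assoc assoc_rule[OF L])
  have "RL ** (diag_mat (\<chi> k. cos (g $ k)) ** diag_mat (\<chi> k. cos (g $ k))) ** transpose RL
      + RL ** (diag_mat (\<chi> k. sin (g $ k)) ** diag_mat (\<chi> k. sin (g $ k))) ** transpose RL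
      = RL ** (diag_mat (\<chi> k. cos (g $ k)) ** diag_mat (\<chi> k. cos (g $ k)) + diag_mat (\<chi> k. sin (g $ k)) ** diag_mat (\<chi> k. sin (g $ k))) ** transpose RL"
    by (simp add: matrix_add_ldistrib mm_add_r)
  also have "diag_mat (\<chi> k. cos (g $ k)) ** diag_mat (\<chi> k. cos (g $ k)) + diag_mat (\<chi> k. sin (g $ k)) ** diag_mat (\<chi> k. sin (g $ k)) = mat 1"
  proof -
    have "(\<chi> k. cos (g $ k) * cos (g $ k)) + (\<chi> k. sin (g $ k) * sin (g $ k)) = (\<chi> k. (1::real))"
      by (simp add: vec_eq_iff)
    then show ?thesis by (simp add: diag_mult diag_add diag_one)
  qed
  finally show ?thesis using R by (simp add: e1 eq_diff_eq)
qed

lemma proj_gram: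
  fixes U Ut :: "real^'r^'n"
  assumes "transpose U ** U = mat 1" "transpose Ut ** Ut = mat 1"
  shows "transpose (Ut - U ** (transpose U ** Ut)) ** (Ut - U ** (transpose U ** Ut))
       = mat 1 - transpose (transpose U ** Ut) ** (transpose U ** Ut)"
proof -
  let ?N = "transpose U ** Ut"
  have "transpose (Ut - U ** ?N) = transpose Ut - transpose ?N ** transpose U"
    by (simp add: transpose_diff matrix_transpose_mul)
  then have "transpose (Ut - U ** ?N) ** (Ut - U ** ?N) = 
     transpose Ut ** Ut - transpose Ut ** (U ** ?N) - (transpose ?N ** transpose U ** Ut - transpose ?N ** transpose U ** (U ** ?N))"
    by (simp add: mm_diff_l mm_diff_r)
  also have "transpose ?N ** transpose U ** (U ** ?N) = transpose ?N ** ?N"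
    by (metis assms(1) matrix_mul_assoc matrix_mul_rid)
  also have "transpose Ut ** (U ** ?N) = transpose ?N ** ?N"
    by (simp add: matrix_transpose_mul matrix_mul_assoc)
  also have "transpose ?N ** transpose U ** Ut = transpose ?N ** ?N"
    by (simp add: matrix_mul_assoc)
  finally show ?thesis using assms(2) by simp
qed

lemma proj_orth:
  fixes U Ut :: "real^'r^'n"
  assumes "transpose U ** U = mat 1"
  shows "transpose U ** (Ut - U ** (transpose U ** Ut)) = 0"
  by (simp add: mm_diff_l matrix_mul_assoc assms)

lemma inner_orth: "transpose U ** E = 0 \<Longrightarrow> inner ((U::real^'r^'n) *v a) ((E::real^'p^'n) *v b) = 0"
  by (simp add: inner_mv matrix_vector_mul_assoc)

lemma fsq_split: "transpose U ** E = 0 \<Longrightarrow> fsq ((U::real^'r^'n) ** P + (E::real^'p^'n) ** Q) = fsq (U ** P) + fsq (E ** Q)"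
  by (rule fsq_orth_add) (simp add: inner_orth flip: matrix_vector_mul_assoc)

lemma fsq_iso: "transpose U ** U = mat 1 \<Longrightarrow> fsq ((U::real^'r^'n) ** P) = fsq P"
  using fsq_gram_left[of U "mat 1::real^'r^'r" P] by simp

lemma fsq_iso_r: "transpose U ** U = mat 1 \<Longrightarrow> fsq (P ** transpose (U::real^'r^'n)) = fsq P"
  using fsq_gram_right[of "transpose U" "mat 1::real^'r^'r" P] by simp

lemma in_span_cols: "(A::real^'n^'m) *v x \<in> span (columns A)"
proof -
  have "A *v x = (\<Sum>i\<in>UNIV. x $ i *\<^sub>R column i A)"
    by (simp add: matrix_mult_sum scalar_mult_eq_scaleR)
  also have "\<dots> \<in> span (columns A)"
    by (intro span_sum span_scale span_base) (auto simp: columns_def)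
  finally show ?thesis .
qed

lemma onb_exists:
  fixes S :: "(real^'n) set"
  assumes "subspace S"
  shows "\<exists>B. finite B \<and> pairwise orthogonal B \<and> (\<forall>b\<in>B. norm b = 1) \<and> span B = S"
proof (rule orthonormal_basis_subspace[OF assms])
  fix B :: "(real^'n) set"
  assume h: "B \<subseteq> S" "pairwise orthogonal B" "\<And>x. x \<in> B \<Longrightarrow> norm x = 1"
     "independent B" "card B = dim S" "span B = S"
  have "finite B" by (rule pairwise_orthogonal_imp_finite[OF h(2)])
  then show ?thesis
    by (intro exI[of _ B] conjI ballI h(2) h(3) h(6))
qed

lemma onb_of_spec:
  fixes S :: "(real^'n) set"
  assumes "subspace S"
  shows "finite (onb_of S)" "pairwise orthogonal (onb_of S)" "\<And>b. b \<in> onb_of S \<Longrightarrow> norm b = 1"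
        "span (onb_of S) = S"
proof -
  have "finite (onb_of S) \<and> pairwise orthogonal (onb_of S) \<and> (\<forall>b\<in>onb_of S. norm b = 1) \<and> span (onb_of S) = S"
    unfolding onb_of_def by (rule someI_ex[OF onb_exists[OF assms]])
  then show "finite (onb_of S)" "pairwise orthogonal (onb_of S)" "\<And>b. b \<in> onb_of S \<Longrightarrow> norm b = 1"
        "span (onb_of S) = S" by simp_all
qed

lemma onb_inner:
  assumes "pairwise orthogonal B" "\<And>b. b \<in> B \<Longrightarrow> norm b = 1" "b \<in> B" "c \<in> B"
  shows "inner b c = (if b = c then 1 else 0)"
proof (cases "b = c")
  case True
  then show ?thesis using assms(2)[OF assms(3)] by (simp add: norm_eq_1)
next
  case False
  then show ?thesis using pairwiseD[OF assms(1) assms(3) assms(4) False] by (simp add: orthogonal_def)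
qed

lemma proj_exists:
  fixes S :: "(real^'n) set"
  assumes "subspace S"
  shows "\<exists>p\<in>S. \<forall>s\<in>S. inner (x - p) s = 0"
proof -
  obtain B where B: "finite B" "pairwise orthogonal B" "\<forall>b\<in>B. norm b = 1" "span B = S"
    using onb_exists[OF assms] by blast
  define p where "p = (\<Sum>b\<in>B. inner x b *\<^sub>R b)"
  have "p \<in> span B" unfolding p_def by (auto intro: span_sum span_scale span_base)
  then have pS: "p \<in> S" using B(4) by simp
  have ob: "orthogonal (x - p) b'" if "b' \<in> B" for b'
  proof -
    have "inner p b' = (\<Sum>b\<in>B. inner x b * inner b b')"
      unfolding p_def by (simp add: inner_sum_left)
    also have "\<dots> = (\<Sum>b\<in>B. if b = b' then inner x b' else 0)"
      by (rule sum.cong) (use B that in \<open>auto simp: onb_inner\<close>)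
    also have "\<dots> = inner x b'" using B(1) that by simp
    finally show ?thesis by (simp add: orthogonal_def inner_diff_left)
  qed
  have "\<forall>s\<in>S. inner (x - p) s = 0"
  proof
    fix s assume "s \<in> S"
    then have "s \<in> span B" using B(4) by simp
    then have "orthogonal (x - p) s" by (rule orthogonal_to_span[OF _ ob])
    then show "inner (x - p) s = 0" by (simp add: orthogonal_def)
  qed
  with pS show ?thesis by blast
qed

lemma proj_sum:
  fixes B :: "(real^'n) set"
  assumes B: "finite B" "pairwise orthogonal B" "\<And>b. b \<in> B \<Longrightarrow> norm b = 1"
    and p: "p \<in> span B" "\<forall>s\<in>span B. inner (x - p) s = 0"
  shows "(\<Sum>b\<in>B. (inner b x)^2) = (norm p)^2"
proof -
  have e: "p = (\<Sum>b\<in>B. inner p b *\<^sub>R b)"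
    using orthonormal_basis_expand[OF B(2) B(3) p(1) B(1)] by simp
  have bx: "inner b x = inner p b" if "b \<in> B" for b
  proof -
    have "inner (x - p) b = 0" using p(2) span_base[OF that] by blast
    then have "inner b (x - p) = 0" by (simp only: inner_commute)
    then have "inner b x = inner b p" by (simp only: inner_diff_right right_minus_eq)
    then show ?thesis by (simp only: inner_commute[of b p])
  qed
  have "(norm p)^2 = inner p p" by (simp add: power2_norm_eq_inner)
  also have "\<dots> = inner p (\<Sum>b\<in>B. inner p b *\<^sub>R b)" using e by simp
  also have "\<dots> = (\<Sum>b\<in>B. inner p b * inner p b)"
    by (simp add: inner_sum_right)
  also have "\<dots> = (\<Sum>b\<in>B. (inner b x)^2)"
    by (rule sum.cong) (simp_all only: bx power2_eq_square)
  finally show ?thesis by simp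
qed

lemma leverage_eq:
  fixes S :: "(real^'n) set"
  assumes "subspace S" "p \<in> S" "\<forall>s\<in>S. inner (axis i 1 - p) s = 0"
  shows "leverage S i = real CARD('n) / real (dim S) * (norm p)^2"
proof -
  note o = onb_of_spec[OF assms(1)]
  have "(\<Sum>b\<in>onb_of S. (b $ i)^2) = (\<Sum>b\<in>onb_of S. (inner b (axis i 1))^2)"
    by (simp add: cart_eq_inner_axis)
  also have "\<dots> = (norm p)^2"
    by (rule proj_sum) (use o assms in auto)
  finally show ?thesis unfolding leverage_def by simp
qed

lemma range_orth:
  fixes E :: "real^'p^'n"
  assumes "\<And>z. E *v z \<in> S" "\<forall>s\<in>S. inner (e - p) s = 0"
  shows "transpose E *v e = transpose E *v p"
proof -
  define d where "d = transpose E *v (e - p)"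
  have "inner d d = inner (E *v d) (e - p)" unfolding d_def by (simp add: inner_mv)
  also have "\<dots> = 0" using assms by (simp add: inner_commute)
  finally have "d = 0" by simp
  then show ?thesis unfolding d_def by (simp add: matrix_vector_mult_diff_distrib)
qed

lemma iso_inner: "transpose U ** U = mat 1 \<Longrightarrow> inner ((U::real^'r^'n) *v a) (U *v b) = inner a b"
  by (simp add: inner_mv matrix_vector_mul_assoc)

lemma dim_cols_iso:
  fixes U :: "real^'r^'n"
  assumes "transpose U ** U = mat 1"
  shows "dim (span (columns U)) = CARD('r)"
proof -
  have cU: "columns U = (\<lambda>k. U *v axis k 1) ` UNIV"
    by (simp add: columns_image_basis image_image)
  have inj: "inj (\<lambda>k. U *v axis k (1::real))"
  proof (rule injI)
    fix k l assume "U *v axis k (1::real) = U *v axis l 1"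
    then have "(transpose U ** U) *v axis k (1::real) = (transpose U ** U) *v axis l 1"
      by (simp flip: matrix_vector_mul_assoc)
    then show "k = l" using assms by (simp add: axis_eq_axis)
  qed
  have po: "pairwise orthogonal (columns U)"
    unfolding cU pairwise_def orthogonal_def
    by (auto simp: iso_inner[OF assms] inner_axis_axis)
  have n0: "0 \<notin> columns U"
  proof
    assume "0 \<in> columns U"
    then obtain k where "U *v axis k 1 = 0" unfolding cU by auto
    then have "inner (U *v axis k 1) (U *v axis k 1) = 0" by simp
    then show False by (simp add: iso_inner[OF assms] inner_axis)
  qed
  have "dim (span (columns U)) = card (columns U)"
    by (simp add: dim_eq_card_independent pairwise_orthogonal_independent[OF po n0])
  also have "\<dots> = CARD('r)" unfolding cU by (simp add: card_image[OF inj])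
  finally show ?thesis .
qed

lemma lev_U:
  fixes U :: "real^'r^'n"
  assumes "transpose U ** U = mat 1"
  shows "leverage (span (columns U)) i = real CARD('n) / real CARD('r) * (norm (transpose U *v axis i 1))^2"
proof -
  let ?e = "axis i (1::real)" and ?S = "span (columns U)"
  let ?p = "U *v (transpose U *v ?e)"
  have o: "\<forall>s\<in>?S. inner (?e - ?p) s = 0"
  proof
    fix s assume s: "s \<in> ?S"
    have "orthogonal (?e - ?p) y" if "y \<in> columns U" for y
    proof -
      from that obtain k where "y = U *v axis k 1" unfolding columns_image_basis by blast
      moreover have "inner (?e - ?p) (U *v a) = 0" for a
      proof -
        have h: "transpose U *v (?e - ?p) = 0"
          by (simp only: matrix_vector_mult_diff_distrib matrix_vector_mul_assoc[of "transpose U" U] assms matrix_vector_mul_lid diff_self)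
        show ?thesis by (simp only: inner_commute[of "?e - ?p"] inner_mv h inner_zero_right)
      qed
      ultimately show ?thesis by (simp add: orthogonal_def)
    qed
    then have "orthogonal (?e - ?p) s" by (rule orthogonal_to_span[OF s])
    then show "inner (?e - ?p) s = 0" by (simp add: orthogonal_def)
  qed
  have "leverage ?S i = real CARD('n) / real (dim ?S) * (norm ?p)^2"
    by (rule leverage_eq[OF subspace_span in_span_cols o])
  then show ?thesis by (simp only: dim_cols_iso[OF assms] isometry_norm[OF assms])
qed

lemma lev_bound:
  fixes U W :: "real^'r^'n"
  assumes "transpose U ** U = mat 1"
  shows "\<exists>p\<in>span (columns U \<union> columns W). (\<forall>s\<in>span (columns U \<union> columns W). inner (axis i 1 - p) s = 0)
     \<and> real CARD('n) * (norm p)^2 \<le> 2 * real CARD('r) * leverage (span (columns U \<union> columns W)) i"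
proof -
  let ?S = "span (columns U \<union> columns W)"
  obtain p where p: "p \<in> ?S" "\<forall>s\<in>?S. inner (axis i 1 - p) s = 0"
    using proj_exists[OF subspace_span] by blast
  define d where "d = dim ?S"
  have lev: "leverage ?S i = real CARD('n) / real d * (norm p)^2"
    unfolding d_def by (rule leverage_eq[OF subspace_span p])
  have "dim (span (columns U)) \<le> dim ?S"
    by (rule dim_subset) (rule span_mono, rule Un_upper1)
  then have "CARD('r) \<le> d" unfolding d_def by (simp only: dim_cols_iso[OF assms])
  moreover have "0 < CARD('r)" by simp
  ultimately have d0: "0 < d" by linarith
  have fc: "finite (columns A)" for A :: "real^'r^'n"
    by (simp add: columns_image_basis)
  have cc: "card (columns A) \<le> CARD('r)" for A :: "real^'r^'n"
    unfolding columns_image_basis image_image by (rule card_image_le) simp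
  have "d = dim (columns U \<union> columns W)" unfolding d_def by (rule dim_span)
  also have "\<dots> \<le> card (columns U \<union> columns W)"
    by (rule dim_le_card) (auto simp: fc span_superset)
  also have "\<dots> \<le> card (columns U) + card (columns W)" by (rule card_Un_le)
  also have "\<dots> \<le> 2 * CARD('r)" using cc[of U] cc[of W] by simp
  finally have d2: "real d \<le> 2 * real CARD('r)" by simp
  have dpos: "real d > 0" using d0 by simp
  have "real CARD('n) * (norm p)^2 = real d * leverage ?S i"
    unfolding lev using dpos by (simp add: field_simps)
  also have "\<dots> \<le> 2 * real CARD('r) * leverage ?S i"
    using d2 by (rule mult_right_mono) (simp add: lev)
  finally show ?thesis using p by blast
qed

lemma mm_neg_r: "(A::'a::ring_1^_^_) ** (- B) = - (A ** B)"
  by (vector matrix_matrix_mult_def sum_negf[symmetric])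
lemma mm_neg_l: "(- (A::'a::ring_1^_^_)) ** B = - (A ** B)"
  by (vector matrix_matrix_mult_def sum_negf[symmetric])

lemma PTperp_eq:
  fixes U V Ut Vt :: "real^'r^'n"
  shows "PTperp U V (Ut ** transpose Vt) = (Ut - U ** (transpose U ** Ut)) ** transpose (Vt - V ** (transpose V ** Vt))"
  unfolding PTperp_def PT_def
  by (simp add: mm_diff_l mm_diff_r transpose_diff matrix_transpose_mul matrix_mul_assoc algebra_simps)

lemma PT_eq:
  fixes U V Ut Vt :: "real^'r^'n"
  shows "PT U V (Ut ** transpose Vt) = U ** (transpose U ** Ut) ** transpose Vt + Ut ** (transpose Vt ** V) ** transpose V
     - U ** ((transpose U ** Ut) ** (transpose Vt ** V)) ** transpose V"
  unfolding PT_def by (simp add: matrix_mul_assoc)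

lemma W0_eq:
  fixes U V Ut Vt :: "real^'r^'n"
  defines "N \<equiv> transpose U ** Ut" and "M \<equiv> transpose Vt ** V"
  shows "U ** transpose V - lam *\<^sub>R PT U V (Ut ** transpose Vt) =
    U ** ((mat 1 - lam *\<^sub>R (N ** M)) ** transpose V + (-lam) *\<^sub>R (N ** transpose (Vt - V ** transpose M)))
    + (Ut - U ** N) ** ((-lam) *\<^sub>R (M ** transpose V))"
proof -
  have tM: "transpose M = transpose V ** Vt" unfolding M_def by (simp add: matrix_transpose_mul)
  have "U ** ((mat 1 - lam *\<^sub>R (N ** M)) ** transpose V + (-lam) *\<^sub>R (N ** transpose (Vt - V ** transpose M)))
    + (Ut - U ** N) ** ((-lam) *\<^sub>R (M ** transpose V))
    = U ** transpose V - lam *\<^sub>R (U ** N ** M ** transpose V) - lam *\<^sub>R (U ** N ** transpose Vt)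
      + lam *\<^sub>R (U ** N ** M ** transpose V) - lam *\<^sub>R (Ut ** M ** transpose V) + lam *\<^sub>R (U ** N ** M ** transpose V)"
    by (simp add: mm_diff_l mm_diff_r matrix_add_ldistrib mm_add_r transpose_diff matrix_transpose_mul
        matrix_mul_assoc matrix_scalar_ac scalar_matrix_assoc[symmetric] algebra_simps mm_neg_r mm_neg_l)
  also have "\<dots> = U ** transpose V - lam *\<^sub>R (U ** N ** transpose Vt + Ut ** M ** transpose V - U ** N ** M ** transpose V)"
    by (simp add: algebra_simps)
  also have "\<dots> = U ** transpose V - lam *\<^sub>R PT U V (Ut ** transpose Vt)"
    unfolding PT_eq N_def M_def by (simp add: matrix_mul_assoc)
  finally show ?thesis by simp
qed

lemma weight:
  fixes n r mu mub a b Mx beta :: real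
  assumes n: "n > 0" and r: "r > 0" and mu: "mu = n / r * a^2" "mu > 0" and ab: "a \<ge> 0" "b \<ge> 0"
    and b: "n * b^2 \<le> 2 * r * mub" and M: "mub / mu \<le> Mx" and be: "sqrt (2 * Mx) \<le> beta"
  shows "sqrt (n / (mu * r)) * a = 1" "sqrt (n / (mu * r)) * b \<le> beta"
proof -
  have a0: "a > 0"
  proof (rule ccontr)
    assume "\<not> a > 0"
    then have "a = 0" using ab by simp
    then have "mu = 0" using mu(1) by simp
    then show False using mu(2) by simp
  qed
  have mr: "mu * r = n * a^2" using mu(1) r by simp
  have e: "n / (mu * r) = 1 / a^2" unfolding mr using n by simp
  have s: "sqrt (n / (mu * r)) = 1 / a" unfolding e using a0 by (simp add: real_sqrt_divide)
  show "sqrt (n / (mu * r)) * a = 1" unfolding s using a0 by simp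
  have "(b / a)^2 = b^2 * (n / (mu * r))" unfolding e by (simp add: power_divide)
  also have "\<dots> = n * b^2 / (mu * r)" by simp
  also have "\<dots> \<le> 2 * r * mub / (mu * r)"
    by (rule divide_right_mono[OF b]) (use mu(2) r in simp)
  also have "\<dots> = 2 * (mub / mu)" using r by simp
  also have "\<dots> \<le> 2 * Mx" using M by simp
  finally have "(b / a)^2 \<le> 2 * Mx" .
  then have "b / a \<le> sqrt (2 * Mx)" by (rule real_le_rsqrt)
  then show "sqrt (n / (mu * r)) * b \<le> beta" unfolding s using be by simp
qed

lemma final_row:
  fixes x s1 s2 s3 a b c beta :: real
  assumes "x \<le> (s1 + s2) * a + s3 * b" "c * a = 1" "c * b \<le> beta" "c \<ge> 0" "1 \<le> beta"
    "s1 \<ge> 0" "s2 \<ge> 0" "s3 \<ge> 0"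
  shows "c * x \<le> (s1 + s2 + s3) * beta"
proof -
  have "c * x \<le> c * ((s1 + s2) * a + s3 * b)" using assms(1,4) by (rule mult_left_mono)
  also have "\<dots> = (s1 + s2) * (c * a) + s3 * (c * b)" by (simp add: algebra_simps)
  also have "\<dots> = (s1 + s2) + s3 * (c * b)" using assms(2) by simp
  also have "s3 * (c * b) \<le> s3 * beta" using assms(3,8) by (rule mult_left_mono)
  also have "(s1 + s2) * 1 \<le> (s1 + s2) * beta" using assms(5-7) by (intro mult_left_mono) simp_all
  then have "(s1 + s2) + s3 * beta \<le> (s1 + s2 + s3) * beta" by (simp add: distrib_right)
  finally show ?thesis by simp
qed

lemma final_entry:
  fixes x s1 s2 s3 a b a' b' c c' beta :: real
  assumes "\<bar>x\<bar> \<le> a * (s1 * a' + s2 * b') + b * (s3 * a')" "c * a = 1" "c * b \<le> beta"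
    "c' * a' = 1" "c' * b' \<le> beta" "c \<ge> 0" "c' \<ge> 0" "1 \<le> beta"
    "s1 \<ge> 0" "s2 \<ge> 0" "s3 \<ge> 0"
  shows "c * \<bar>x\<bar> * c' \<le> (s1 + s2 + s3) * beta"
proof -
  have cc: "c * c' \<ge> 0" using assms(6,7) by simp
  have "c * \<bar>x\<bar> * c' = (c * c') * \<bar>x\<bar>" by (simp add: ac_simps)
  also have "\<dots> \<le> (c * c') * (a * (s1 * a' + s2 * b') + b * (s3 * a'))"
    using assms(1) cc by (rule mult_left_mono)
  also have "\<dots> = s1 * (c * a) * (c' * a') + s2 * (c * a) * (c' * b') + s3 * (c * b) * (c' * a')"
    by (simp add: algebra_simps)
  also have "\<dots> = s1 + s2 * (c' * b') + s3 * (c * b)" using assms(2,4) by simp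
  finally have h: "c * \<bar>x\<bar> * c' \<le> s1 + s2 * (c' * b') + s3 * (c * b)" .
  have h1: "s1 * 1 \<le> s1 * beta" using assms(8,9) by (rule mult_left_mono)
  have h2: "s2 * (c' * b') \<le> s2 * beta" using assms(5,10) by (rule mult_left_mono)
  have h3: "s3 * (c * b) \<le> s3 * beta" using assms(3,11) by (rule mult_left_mono)
  have "(s1 + s2 + s3) * beta = s1 * beta + s2 * beta + s3 * beta" by (simp add: algebra_simps)
  then show ?thesis using h h1 h2 h3 by linarith
qed

lemma Max_range_le:
  fixes f :: "'a::finite \<Rightarrow> real"
  assumes "\<And>i. f i \<le> B"
  shows "Max {f i | i. True} \<le> B"
proof -
  have e: "{f i | i. True} = range f" by auto
  show ?thesis unfolding e using assms by (simp add: Max_le_iff)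
qed

lemma Max_range2_le:
  fixes f :: "'a::finite \<Rightarrow> 'b::finite \<Rightarrow> real"
  assumes "\<And>i j. f i j \<le> B"
  shows "Max {f i j | i j. True} \<le> B"
proof -
  have e: "{f i j | i j. True} = (\<lambda>(i, j). f i j) ` UNIV" by auto
  show ?thesis unfolding e using assms by (simp add: Max_le_iff)
qed

lemma Max_range_ge:
  fixes f :: "'a::finite \<Rightarrow> real"
  shows "f i \<le> Max {f i | i. True}"
proof -
  have e: "{f i | i. True} = range f" by auto
  show ?thesis unfolding e by (rule Max_ge) auto
qed

lemma transpose_neg: "transpose (- (A::'a::ab_group_add^_^_)) = - transpose A"
  by (vector transpose_def)

theorem lemma8:
  fixes Xs :: "real^'n^'n"
    and U V Ut Vt :: "real^'r^'n"
    and LL RL LR RR :: "real^'r^'r"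
    and \<gamma> \<eta> :: "real^'r"
    and lam :: real
  assumes n_ge: "CARD('n) \<ge> 2 * CARD('r)"
    and rankX: "rank Xs = CARD('r)"
    and U_orth: "transpose U ** U = mat 1"
    and V_orth: "transpose V ** V = mat 1"
    and U_span: "span (columns U) = span (columns Xs)"
    and V_span: "span (columns V) = span (rows Xs)"
    and Ut_orth: "transpose Ut ** Ut = mat 1"
    and Vt_orth: "transpose Vt ** Vt = mat 1"
    and orthL: "orthogonal_matrix LL" "orthogonal_matrix RL"
               "orthogonal_matrix LR" "orthogonal_matrix RR"
    and gamma_range: "\<And>k. 0 \<le> \<gamma> $ k \<and> \<gamma> $ k \<le> pi / 2"
    and eta_range: "\<And>k. 0 \<le> \<eta> $ k \<and> \<eta> $ k \<le> pi / 2"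
    and svdU: "transpose U ** Ut = LL ** diag_mat (\<chi> k. cos (\<gamma> $ k)) ** transpose RL"
    and svdV: "transpose V ** Vt = LR ** diag_mat (\<chi> k. cos (\<eta> $ k)) ** transpose RR"
    and mu_pos: "\<And>i. leverage (span (columns U)) i > 0"
    and nu_pos: "\<And>j. leverage (span (columns V)) j > 0"
    and lam: "lam \<ge> 0"
  shows
    "let cG = diag_mat (\<chi> k. cos (\<gamma> $ k)); sG = diag_mat (\<chi> k. sin (\<gamma> $ k));
         cH = diag_mat (\<chi> k. cos (\<eta> $ k)); sH = diag_mat (\<chi> k. sin (\<eta> $ k));
         Acc = LL ** cG ** transpose RL ** RR ** cH ** transpose LR;
         Acs = LL ** cG ** transpose RL ** RR ** sH ** transpose LR;
         Asc = LL ** sG ** transpose RL ** RR ** cH ** transpose LR;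
         Ass = LL ** sG ** transpose RL ** RR ** sH ** transpose LR;
         W0 = U ** transpose V - lam *\<^sub>R PT U V (Ut ** transpose Vt);
         \<alpha>1 = sqrt ((frobnorm (mat 1 - lam *\<^sub>R Acc))^2 + (frobnorm (lam *\<^sub>R Acs))^2
                    + (frobnorm (lam *\<^sub>R Asc))^2);
         \<alpha>2 = specnorm (lam *\<^sub>R Ass);
         \<alpha>3 = specnorm (mat 1 - lam *\<^sub>R Acc) + specnorm (lam *\<^sub>R Asc) + specnorm (lam *\<^sub>R Acs);
         mub = leverage (span (columns U \<union> columns Ut));
         nub = leverage (span (columns V \<union> columns Vt));
         mu = leverage (span (columns U)); nu = leverage (span (columns V));
         \<beta> = max 1 (max (sqrt (2 * Max {mub i / mu i | i. True}))
                         (sqrt (2 * Max {nub j / nu j | j. True})))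
     in frobnorm W0 = \<alpha>1
        \<and> specnorm (lam *\<^sub>R PTperp U V (Ut ** transpose Vt)) = \<alpha>2
        \<and> mu_inf2_norm U V W0 \<le> \<alpha>3 * \<beta>
        \<and> mu_inf_norm U V W0 \<le> \<alpha>3 * \<beta>"
proof -
  define cG where "cG = diag_mat (\<chi> k. cos (\<gamma> $ k))"
  define sG where "sG = diag_mat (\<chi> k. sin (\<gamma> $ k))"
  define cH where "cH = diag_mat (\<chi> k. cos (\<eta> $ k))"
  define sH where "sH = diag_mat (\<chi> k. sin (\<eta> $ k))"
  define Acc where "Acc = LL ** cG ** transpose RL ** RR ** cH ** transpose LR"
  define Acs where "Acs = LL ** cG ** transpose RL ** RR ** sH ** transpose LR"
  define Asc where "Asc = LL ** sG ** transpose RL ** RR ** cH ** transpose LR"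
  define Ass where "Ass = LL ** sG ** transpose RL ** RR ** sH ** transpose LR"
  define W0 where "W0 = U ** transpose V - lam *\<^sub>R PT U V (Ut ** transpose Vt)"
  define N where "N = transpose U ** Ut"
  define NV where "NV = transpose V ** Vt"
  define M where "M = transpose Vt ** V"
  define Eu where "Eu = Ut - U ** N"
  define Ev where "Ev = Vt - V ** NV"
  define G1 where "G1 = LL ** sG ** transpose RL"
  define G2 where "G2 = LR ** sH ** transpose RR"
  define K where "K = mat 1 - lam *\<^sub>R Acc"
  define P where "P = K ** transpose V + (-lam) *\<^sub>R (N ** transpose Ev)"
  define Q where "Q = (-lam) *\<^sub>R (M ** transpose V)"

  have N_eq: "N = LL ** cG ** transpose RL" using svdU unfolding N_def cG_def .
  have NV_eq: "NV = LR ** cH ** transpose RR" using svdV unfolding NV_def cH_def .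
  have M_NV: "M = transpose NV" unfolding M_def NV_def by (simp add: matrix_transpose_mul)
  have M_eq: "M = RR ** cH ** transpose LR"
    unfolding M_NV NV_eq cH_def by (simp add: matrix_transpose_mul transpose_diag matrix_mul_assoc)
  have tG2: "transpose G2 = RR ** sH ** transpose LR"
    unfolding G2_def sH_def by (simp add: matrix_transpose_mul transpose_diag matrix_mul_assoc)
  have gEu: "transpose Eu ** Eu = transpose G1 ** G1"
  proof -
    have "transpose Eu ** Eu = mat 1 - transpose N ** N"
      unfolding Eu_def N_def by (rule proj_gram[OF U_orth Ut_orth])
    also have "transpose N ** N = mat 1 - transpose G1 ** G1"
      unfolding N_eq G1_def cG_def sG_def by (rule cs_gram[OF orthL(1) orthL(2)])
    finally show ?thesis by simp
  qed
  have gEv: "transpose Ev ** Ev = transpose G2 ** G2"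
  proof -
    have "transpose Ev ** Ev = mat 1 - transpose NV ** NV"
      unfolding Ev_def NV_def by (rule proj_gram[OF V_orth Vt_orth])
    also have "transpose NV ** NV = mat 1 - transpose G2 ** G2"
      unfolding NV_eq G2_def cH_def sH_def by (rule cs_gram[OF orthL(3) orthL(4)])
    finally show ?thesis by simp
  qed
  have oU: "transpose U ** Eu = 0" unfolding Eu_def N_def by (rule proj_orth[OF U_orth])
  have oV: "transpose V ** Ev = 0" unfolding Ev_def NV_def by (rule proj_orth[OF V_orth])
  have Acc_eq: "Acc = N ** M" unfolding Acc_def N_eq M_eq by (simp add: matrix_mul_assoc)
  have Acs_eq: "Acs = N ** transpose G2" unfolding Acs_def N_eq tG2 by (simp add: matrix_mul_assoc)
  have Asc_eq: "Asc = G1 ** M" unfolding Asc_def G1_def M_eq by (simp add: matrix_mul_assoc)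
  have Ass_eq: "Ass = G1 ** transpose G2" unfolding Ass_def G1_def tG2 by (simp add: matrix_mul_assoc)
  have W0_split: "W0 = U ** P + Eu ** Q"
  proof -
    have tM: "transpose M = NV" unfolding M_NV by simp
    show ?thesis
      using W0_eq[of U V lam Ut Vt] unfolding W0_def P_def Q_def K_def Acc_eq Eu_def Ev_def
      unfolding N_def[symmetric] M_def[symmetric] tM .
  qed
  have PTp: "PTperp U V (Ut ** transpose Vt) = Eu ** transpose Ev"
    using PTperp_eq[of U V Ut Vt] unfolding Eu_def Ev_def N_def NV_def .

  have tP: "transpose P = V ** transpose K + Ev ** ((-lam) *\<^sub>R transpose N)"
    unfolding P_def
    by (simp add: transpose_add transpose_scalar matrix_transpose_mul matrix_scalar_ac scalar_matrix_assoc transpose_neg mm_neg_r mm_neg_l transpose_diff)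
  have G2N: "G2 ** ((-lam) *\<^sub>R transpose N) = (-lam) *\<^sub>R transpose Acs"
    unfolding Acs_eq by (simp add: matrix_transpose_mul matrix_scalar_ac scalar_matrix_assoc mm_neg_r mm_neg_l)
  have G1Q: "G1 ** Q = (-lam) *\<^sub>R (Asc ** transpose V)"
    unfolding Q_def Asc_eq by (simp add: matrix_scalar_ac scalar_matrix_assoc matrix_mul_assoc mm_neg_r mm_neg_l)
  have fW: "fsq W0 = fsq K + lam^2 * fsq Acs + lam^2 * fsq Asc"
  proof -
    have "fsq W0 = fsq (U ** P) + fsq (Eu ** Q)" unfolding W0_split by (rule fsq_split[OF oU])
    also have "fsq (U ** P) = fsq P" by (rule fsq_iso[OF U_orth])
    also have "fsq P = fsq (transpose P)" by (simp only: fsq_transpose)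
    also have "\<dots> = fsq (V ** transpose K) + fsq (Ev ** ((-lam) *\<^sub>R transpose N))"
      unfolding tP by (rule fsq_split[OF oV])
    also have "fsq (V ** transpose K) = fsq K" by (simp only: fsq_iso[OF V_orth] fsq_transpose)
    also have "fsq (Ev ** ((-lam) *\<^sub>R transpose N)) = fsq (G2 ** ((-lam) *\<^sub>R transpose N))"
      by (rule fsq_gram_left[OF gEv])
    also have "\<dots> = lam^2 * fsq Acs" unfolding G2N by (simp only: fsq_scale fsq_transpose) simp
    also have "fsq (Eu ** Q) = fsq (G1 ** Q)" by (rule fsq_gram_left[OF gEu])
    also have "\<dots> = lam^2 * fsq Asc" unfolding G1Q by (simp only: fsq_scale fsq_iso_r[OF V_orth]) simp
    finally show ?thesis by simp
  qed
  have part1: "frobnorm W0 = sqrt ((frobnorm K)^2 + (frobnorm (lam *\<^sub>R Acs))^2 + (frobnorm (lam *\<^sub>R Asc))^2)"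
    unfolding frob_fsq fW by (simp add: fsq_nonneg fsq_scale)

  have part2: "specnorm (lam *\<^sub>R PTperp U V (Ut ** transpose Vt)) = specnorm (lam *\<^sub>R Ass)"
  proof -
    have h: "transpose Ev ** transpose (transpose Ev) = transpose G2 ** transpose (transpose G2)"
      using gEv by simp
    have "specnorm (Eu ** transpose Ev) = specnorm (G1 ** transpose Ev)" by (rule spec_gram_left[OF gEu])
    also have "\<dots> = specnorm (G1 ** transpose G2)" by (rule spec_gram_right[OF h])
    finally show ?thesis unfolding PTp spec_scale Ass_eq by simp
  qed

  define sK where "sK = specnorm K"
  define sAcs where "sAcs = specnorm Acs"
  define sAsc where "sAsc = specnorm Asc"
  have sK0: "sK \<ge> 0" and sAcs0: "sAcs \<ge> 0" and sAsc0: "sAsc \<ge> 0"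
    unfolding sK_def sAcs_def sAsc_def by (simp_all add: spec_nonneg)
  have sP1: "norm (transpose P *v u) \<le> (sK + lam * sAcs) * norm u" for u
  proof -
    have "transpose P *v u = V *v (transpose K *v u) + Ev *v (((-lam) *\<^sub>R transpose N) *v u)"
      unfolding tP by (simp add: matrix_vector_mult_add_rdistrib matrix_vector_mul_assoc)
    then have "norm (transpose P *v u) \<le> norm (V *v (transpose K *v u)) + norm (Ev *v (((-lam) *\<^sub>R transpose N) *v u))"
      by (simp add: norm_triangle_ineq)
    also have "norm (V *v (transpose K *v u)) = norm (transpose K *v u)" by (rule isometry_norm[OF V_orth])
    also have "\<dots> \<le> sK * norm u" unfolding sK_def using spec_bound[of "transpose K" u] by (simp add: spec_transpose)
    also have "norm (Ev *v (((-lam) *\<^sub>R transpose N) *v u)) = norm (G2 *v (((-lam) *\<^sub>R transpose N) *v u))"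
      by (rule gram_norm[OF gEv])
    also have "\<dots> = norm (((-lam) *\<^sub>R transpose Acs) *v u)" by (simp only: matrix_vector_mul_assoc G2N)
    also have "\<dots> \<le> specnorm ((-lam) *\<^sub>R transpose Acs) * norm u" by (rule spec_bound)
    also have "specnorm ((-lam) *\<^sub>R transpose Acs) = lam * sAcs"
      unfolding sAcs_def spec_scale spec_transpose using lam by simp
    finally show ?thesis by (simp add: algebra_simps)
  qed
  have sEQ: "specnorm (Eu ** Q) = lam * sAsc"
  proof -
    have h: "transpose V ** transpose (transpose V) = mat 1 ** transpose (mat 1 :: real^'r^'r)"
      using V_orth by simp
    have "specnorm (Eu ** Q) = specnorm (G1 ** Q)" by (rule spec_gram_left[OF gEu])
    also have "\<dots> = lam * specnorm (Asc ** transpose V)" unfolding G1Q spec_scale using lam by simp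
    also have "specnorm (Asc ** transpose V) = specnorm (Asc ** mat 1)" by (rule spec_gram_right[OF h])
    finally show ?thesis unfolding sAsc_def by simp
  qed
  have sQ1: "norm (transpose Q *v (transpose Eu *v p)) \<le> lam * sAsc * norm p" for p
  proof -
    have "transpose Q *v (transpose Eu *v p) = transpose (Eu ** Q) *v p"
      by (simp add: matrix_vector_mul_assoc matrix_transpose_mul)
    also have "norm \<dots> \<le> specnorm (transpose (Eu ** Q)) * norm p" by (rule spec_bound)
    finally show ?thesis unfolding spec_transpose sEQ .
  qed
  have sP2: "norm (P *v e) \<le> sK * norm (transpose V *v e) + lam * sAcs * norm p'"
    if ep: "transpose Ev *v e = transpose Ev *v p'" for e p'
  proof -
    have h: "transpose Ev ** transpose (transpose Ev) = transpose G2 ** transpose (transpose G2)"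
      using gEv by simp
    have sNE: "specnorm (N ** transpose Ev) = sAcs"
      unfolding sAcs_def Acs_eq by (rule spec_gram_right[OF h])
    have e1: "(N ** transpose Ev) *v e = (N ** transpose Ev) *v p'"
      by (simp only: matrix_vector_mul_assoc[symmetric] ep)
    have "P *v e = (K ** transpose V) *v e + ((-lam) *\<^sub>R (N ** transpose Ev)) *v e"
      unfolding P_def by (rule matrix_vector_mult_add_rdistrib)
    also have "\<dots> = K *v (transpose V *v e) + (-lam) *\<^sub>R ((N ** transpose Ev) *v p')"
      by (simp only: matrix_vector_mul_assoc scaleR_matrix_vector_assoc[symmetric] e1)
    finally have Pe: "P *v e = K *v (transpose V *v e) + (-lam) *\<^sub>R ((N ** transpose Ev) *v p')" .
    have a: "norm (P *v e) \<le> norm (K *v (transpose V *v e)) + norm ((-lam) *\<^sub>R ((N ** transpose Ev) *v p'))"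
      unfolding Pe by (rule norm_triangle_ineq)
    have b: "norm (K *v (transpose V *v e)) \<le> sK * norm (transpose V *v e)"
      unfolding sK_def by (rule spec_bound)
    have c: "norm ((-lam) *\<^sub>R ((N ** transpose Ev) *v p')) = lam * norm ((N ** transpose Ev) *v p')"
      using lam by simp
    have d: "norm ((N ** transpose Ev) *v p') \<le> sAcs * norm p'"
      using spec_bound[of "N ** transpose Ev" p'] unfolding sNE .
    have d': "lam * norm ((N ** transpose Ev) *v p') \<le> lam * (sAcs * norm p')"
      by (rule mult_left_mono[OF d lam])
    show ?thesis using a[unfolded c] b d' by linarith
  qed
  have sQ2: "norm (Eu *v (Q *v e)) \<le> lam * sAsc * norm (transpose V *v e)" for e
  proof -
    have "norm (Eu *v (Q *v e)) = norm (G1 *v (Q *v e))" by (rule gram_norm[OF gEu])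
    also have "\<dots> = norm ((-lam) *\<^sub>R (Asc *v (transpose V *v e)))"
      by (simp only: matrix_vector_mul_assoc G1Q scaleR_matrix_vector_assoc)
    also have "\<dots> = lam * norm (Asc *v (transpose V *v e))" using lam by simp
    also have "\<dots> \<le> lam * (sAsc * norm (transpose V *v e))"
      unfolding sAsc_def using lam by (intro mult_left_mono spec_bound) simp
    finally show ?thesis by (simp add: ac_simps)
  qed
  have tW0: "transpose W0 = transpose P ** transpose U + transpose Q ** transpose Eu"
    unfolding W0_split by (simp add: transpose_add matrix_transpose_mul)
  have rowW: "norm (row i W0) \<le> (sK + lam * sAcs) * norm (transpose U *v axis i 1) + lam * sAsc * norm p"
    if ep: "transpose Eu *v axis i 1 = transpose Eu *v p" for i p
  proof -
    have "row i W0 = transpose W0 *v axis i 1"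
      by (simp add: row_def vec_eq_iff mv_axis transpose_def)
    also have "\<dots> = transpose P *v (transpose U *v axis i 1) + transpose Q *v (transpose Eu *v p)"
      unfolding tW0 by (simp add: matrix_vector_mult_add_rdistrib matrix_vector_mul_assoc[symmetric] ep)
    finally have rw: "row i W0 = transpose P *v (transpose U *v axis i 1) + transpose Q *v (transpose Eu *v p)" .
    have "norm (row i W0) \<le> norm (transpose P *v (transpose U *v axis i 1)) + norm (transpose Q *v (transpose Eu *v p))"
      unfolding rw by (rule norm_triangle_ineq)
    then show ?thesis using sP1[of "transpose U *v axis i 1"] sQ1[of p] by linarith
  qed
  have colW: "norm (column j W0) \<le> (sK + lam * sAsc) * norm (transpose V *v axis j 1) + lam * sAcs * norm p'"
    if ep: "transpose Ev *v axis j 1 = transpose Ev *v p'" for j p'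
  proof -
    have "column j W0 = W0 *v axis j 1"
      by (simp add: column_def vec_eq_iff mv_axis)
    also have "\<dots> = U *v (P *v axis j 1) + Eu *v (Q *v axis j 1)"
      unfolding W0_split by (simp add: matrix_vector_mult_add_rdistrib matrix_vector_mul_assoc)
    finally have cw: "column j W0 = U *v (P *v axis j 1) + Eu *v (Q *v axis j 1)" .
    have "norm (column j W0) \<le> norm (U *v (P *v axis j 1)) + norm (Eu *v (Q *v axis j 1))"
      unfolding cw by (rule norm_triangle_ineq)
    also have "norm (U *v (P *v axis j 1)) = norm (P *v axis j 1)" by (rule isometry_norm[OF U_orth])
    finally show ?thesis using sP2[OF ep] sQ2[of "axis j 1"] by (simp add: algebra_simps)
  qed
  have entW: "\<bar>W0 $ i $ j\<bar> \<le> norm (transpose U *v axis i 1) * (sK * norm (transpose V *v axis j 1) + lam * sAcs * norm p')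
      + norm p * (lam * sAsc * norm (transpose V *v axis j 1))"
    if ep: "transpose Eu *v axis i 1 = transpose Eu *v p" and ep': "transpose Ev *v axis j 1 = transpose Ev *v p'" for i j p p'
  proof -
    let ?u = "transpose U *v axis i 1"
    have "W0 $ i $ j = inner (W0 *v axis j 1) (axis i 1)"
      by (simp add: cart_eq_inner_axis[symmetric] mv_axis)
    also have "\<dots> = inner (U *v (P *v axis j 1)) (axis i 1) + inner (Eu *v (Q *v axis j 1)) (axis i 1)"
      unfolding W0_split by (simp add: matrix_vector_mult_add_rdistrib matrix_vector_mul_assoc inner_add_left)
    also have "inner (U *v (P *v axis j 1)) (axis i 1) = inner (P *v axis j 1) ?u" by (rule inner_mv)
    also have "inner (Eu *v (Q *v axis j 1)) (axis i 1) = inner (Q *v axis j 1) (transpose Eu *v p)"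
      by (simp only: inner_mv ep)
    also have "inner (Q *v axis j 1) (transpose Eu *v p) = inner (Eu *v (Q *v axis j 1)) p"
      by (simp only: inner_mv)
    finally have eq: "W0 $ i $ j = inner (P *v axis j 1) ?u + inner (Eu *v (Q *v axis j 1)) p" .
    have t: "\<bar>W0 $ i $ j\<bar> \<le> \<bar>inner (P *v axis j 1) ?u\<bar> + \<bar>inner (Eu *v (Q *v axis j 1)) p\<bar>"
      unfolding eq by (rule abs_triangle_ineq)
    have c1: "\<bar>inner (P *v axis j 1) ?u\<bar> \<le> norm (P *v axis j 1) * norm ?u" by (rule Cauchy_Schwarz_ineq2)
    have c2: "\<bar>inner (Eu *v (Q *v axis j 1)) p\<bar> \<le> norm (Eu *v (Q *v axis j 1)) * norm p" by (rule Cauchy_Schwarz_ineq2)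
    have h: "\<bar>W0 $ i $ j\<bar> \<le> norm (P *v axis j 1) * norm ?u + norm (Eu *v (Q *v axis j 1)) * norm p"
      using t c1 c2 by linarith
    have h1: "norm (P *v axis j 1) * norm ?u \<le> (sK * norm (transpose V *v axis j 1) + lam * sAcs * norm p') * norm ?u"
      using sP2[OF ep'] by (rule mult_right_mono) simp
    have h2: "norm (Eu *v (Q *v axis j 1)) * norm p \<le> (lam * sAsc * norm (transpose V *v axis j 1)) * norm p"
      using sQ2 by (rule mult_right_mono) simp
    show ?thesis using h h1 h2 by (simp add: ac_simps)
  qed
  have n0: "real CARD('n) > 0" by simp
  have r0: "real CARD('r) > 0" by simp
  define mub where "mub = leverage (span (columns U \<union> columns Ut))"
  define nub where "nub = leverage (span (columns V \<union> columns Vt))"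
  define mu where "mu = leverage (span (columns U))"
  define nu where "nu = leverage (span (columns V))"
  define \<beta> where "\<beta> = max 1 (max (sqrt (2 * Max {mub i / mu i | i. True}))
                         (sqrt (2 * Max {nub j / nu j | j. True})))"
  have b1: "1 \<le> \<beta>" and bU: "sqrt (2 * Max {mub i / mu i | i. True}) \<le> \<beta>"
    and bV: "sqrt (2 * Max {nub j / nu j | j. True}) \<le> \<beta>"
    unfolding \<beta>_def by simp_all
  define c where "c i = sqrt (real CARD('n) / (mu i * real CARD('r)))" for i
  define c' where "c' j = sqrt (real CARD('n) / (nu j * real CARD('r)))" for j
  have c0: "c i \<ge> 0" for i unfolding c_def using mu_pos[of i] unfolding mu_def[symmetric] by simp
  have c0': "c' j \<ge> 0" for j unfolding c'_def using nu_pos[of j] unfolding nu_def[symmetric] by simp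
  have per_i: "\<exists>p. transpose Eu *v axis i 1 = transpose Eu *v p \<and> c i * norm (transpose U *v axis i 1) = 1
      \<and> c i * norm p \<le> \<beta>" for i
  proof -
    obtain p where p: "p \<in> span (columns U \<union> columns Ut)"
      "\<forall>s\<in>span (columns U \<union> columns Ut). inner (axis i 1 - p) s = 0"
      "real CARD('n) * (norm p)^2 \<le> 2 * real CARD('r) * mub i"
      using lev_bound[OF U_orth, of Ut i] unfolding mub_def by blast
    have rng: "Eu *v z \<in> span (columns U \<union> columns Ut)" for z
    proof -
      have "Eu *v z = Ut *v z - U *v (N *v z)"
        unfolding Eu_def by (simp only: matrix_vector_mult_diff_rdistrib matrix_vector_mul_assoc)
      moreover have "Ut *v z \<in> span (columns U \<union> columns Ut)"
        using in_span_cols[of Ut z] span_mono[of "columns Ut" "columns U \<union> columns Ut"] by blast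
      moreover have "U *v (N *v z) \<in> span (columns U \<union> columns Ut)"
        using in_span_cols[of U "N *v z"] span_mono[of "columns U" "columns U \<union> columns Ut"] by blast
      ultimately show ?thesis by (simp add: span_diff)
    qed
    have ep: "transpose Eu *v axis i 1 = transpose Eu *v p" by (rule range_orth[OF rng p(2)])
    have muv: "mu i = real CARD('n) / real CARD('r) * (norm (transpose U *v axis i 1))^2"
      unfolding mu_def by (rule lev_U[OF U_orth])
    have mp: "mu i > 0" unfolding mu_def by (rule mu_pos)
    have w: "c i * norm (transpose U *v axis i 1) = 1" "c i * norm p \<le> \<beta>"
      unfolding c_def
      by (rule weight[OF n0 r0 muv mp norm_ge_zero norm_ge_zero p(3) Max_range_ge[of "\<lambda>i. mub i / mu i" i] bU])+
    show ?thesis using ep w by blast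
  qed
  have per_j: "\<exists>p. transpose Ev *v axis j 1 = transpose Ev *v p \<and> c' j * norm (transpose V *v axis j 1) = 1
      \<and> c' j * norm p \<le> \<beta>" for j
  proof -
    obtain p where p: "p \<in> span (columns V \<union> columns Vt)"
      "\<forall>s\<in>span (columns V \<union> columns Vt). inner (axis j 1 - p) s = 0"
      "real CARD('n) * (norm p)^2 \<le> 2 * real CARD('r) * nub j"
      using lev_bound[OF V_orth, of Vt j] unfolding nub_def by blast
    have rng: "Ev *v z \<in> span (columns V \<union> columns Vt)" for z
    proof -
      have "Ev *v z = Vt *v z - V *v (NV *v z)"
        unfolding Ev_def by (simp only: matrix_vector_mult_diff_rdistrib matrix_vector_mul_assoc)
      moreover have "Vt *v z \<in> span (columns V \<union> columns Vt)"
        using in_span_cols[of Vt z] span_mono[of "columns Vt" "columns V \<union> columns Vt"] by blast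
      moreover have "V *v (NV *v z) \<in> span (columns V \<union> columns Vt)"
        using in_span_cols[of V "NV *v z"] span_mono[of "columns V" "columns V \<union> columns Vt"] by blast
      ultimately show ?thesis by (simp add: span_diff)
    qed
    have ep: "transpose Ev *v axis j 1 = transpose Ev *v p" by (rule range_orth[OF rng p(2)])
    have nuv: "nu j = real CARD('n) / real CARD('r) * (norm (transpose V *v axis j 1))^2"
      unfolding nu_def by (rule lev_U[OF V_orth])
    have np: "nu j > 0" unfolding nu_def by (rule nu_pos)
    have w: "c' j * norm (transpose V *v axis j 1) = 1" "c' j * norm p \<le> \<beta>"
      unfolding c'_def
      by (rule weight[OF n0 r0 nuv np norm_ge_zero norm_ge_zero p(3) Max_range_ge[of "\<lambda>j. nub j / nu j" j] bV])+
    show ?thesis using ep w by blast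
  qed
  have l0: "lam * sAcs \<ge> 0" "lam * sAsc \<ge> 0" using lam sAcs0 sAsc0 by simp_all
  have rowB: "c i * norm (row i W0) \<le> (sK + lam * sAcs + lam * sAsc) * \<beta>" for i
  proof -
    obtain p where p: "transpose Eu *v axis i 1 = transpose Eu *v p" "c i * norm (transpose U *v axis i 1) = 1"
      "c i * norm p \<le> \<beta>" using per_i[of i] by blast
    show ?thesis by (rule final_row[OF rowW[OF p(1)] p(2) p(3) c0 b1 sK0 l0(1) l0(2)])
  qed
  have colB: "c' j * norm (column j W0) \<le> (sK + lam * sAcs + lam * sAsc) * \<beta>" for j
  proof -
    obtain p where p: "transpose Ev *v axis j 1 = transpose Ev *v p" "c' j * norm (transpose V *v axis j 1) = 1"
      "c' j * norm p \<le> \<beta>" using per_j[of j] by blast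
    have "c' j * norm (column j W0) \<le> (sK + lam * sAsc + lam * sAcs) * \<beta>"
      by (rule final_row[OF colW[OF p(1)] p(2) p(3) c0' b1 sK0 l0(2) l0(1)])
    then show ?thesis by (simp add: ac_simps)
  qed
  have entB: "c i * \<bar>W0 $ i $ j\<bar> * c' j \<le> (sK + lam * sAcs + lam * sAsc) * \<beta>" for i j
  proof -
    obtain p where p: "transpose Eu *v axis i 1 = transpose Eu *v p" "c i * norm (transpose U *v axis i 1) = 1"
      "c i * norm p \<le> \<beta>" using per_i[of i] by blast
    obtain p' where p': "transpose Ev *v axis j 1 = transpose Ev *v p'" "c' j * norm (transpose V *v axis j 1) = 1"
      "c' j * norm p' \<le> \<beta>" using per_j[of j] by blast
    show ?thesis
      by (rule final_entry[OF entW[OF p(1) p'(1)] p(2) p(3) p'(2) p'(3) c0 c0' b1 sK0 l0(1) l0(2)])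
  qed
  have a3: "specnorm K + specnorm (lam *\<^sub>R Asc) + specnorm (lam *\<^sub>R Acs) = sK + lam * sAcs + lam * sAsc"
    unfolding sK_def sAcs_def sAsc_def spec_scale using lam by simp
  have m2: "mu_inf2_norm U V W0 \<le> (specnorm K + specnorm (lam *\<^sub>R Asc) + specnorm (lam *\<^sub>R Acs)) * \<beta>"
    unfolding a3 mu_inf2_norm_def Let_def mu_def[symmetric] nu_def[symmetric]
  proof (rule max.boundedI)
    show "Max {sqrt (real CARD('n) / (mu i * real CARD('r))) * norm (row i W0) |i. True} \<le> (sK + lam * sAcs + lam * sAsc) * \<beta>"
      by (rule Max_range_le) (use rowB in \<open>simp add: c_def\<close>)
    show "Max {sqrt (real CARD('n) / (nu j * real CARD('r))) * norm (column j W0) |j. True} \<le> (sK + lam * sAcs + lam * sAsc) * \<beta>"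
      by (rule Max_range_le) (use colB in \<open>simp add: c'_def\<close>)
  qed
  have m1: "mu_inf_norm U V W0 \<le> (specnorm K + specnorm (lam *\<^sub>R Asc) + specnorm (lam *\<^sub>R Acs)) * \<beta>"
    unfolding a3 mu_inf_norm_def Let_def mu_def[symmetric] nu_def[symmetric]
    by (rule Max_range2_le) (use entB in \<open>simp add: c_def c'_def\<close>)
  have all: "frobnorm W0 = sqrt ((frobnorm K)^2 + (frobnorm (lam *\<^sub>R Acs))^2 + (frobnorm (lam *\<^sub>R Asc))^2)
     \<and> specnorm (lam *\<^sub>R PTperp U V (Ut ** transpose Vt)) = specnorm (lam *\<^sub>R Ass)
     \<and> mu_inf2_norm U V W0 \<le> (specnorm K + specnorm (lam *\<^sub>R Asc) + specnorm (lam *\<^sub>R Acs)) * \<beta>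
     \<and> mu_inf_norm U V W0 \<le> (specnorm K + specnorm (lam *\<^sub>R Asc) + specnorm (lam *\<^sub>R Acs)) * \<beta>"
    using part1 part2 m2 m1 by blast
  show ?thesis
    using all unfolding Let_def W0_def K_def Acc_def Acs_def Asc_def Ass_def cG_def sG_def cH_def sH_def
      \<beta>_def mub_def nub_def mu_def nu_def .
qed

end
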